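(* Let $K$ be a compact and connected subgroup of $U(N)$, let $A\in\mathbb{C}^{N\times N}$ and let $\varphi_0\in\mathbb{R}$. The following are equivalent: (a) $e^{i\varphi_0}\mathcal{O}_K(A)=\mathcal{O}_K(A)$; (b) $e^{i\varphi_0}W_K(C,A)=W_K(C,A)$ for all $C\in\mathbb{C}^{N\times N}$; (c) $e^{i\varphi_0}W_K(A,A)=W_K(A,A)$. Moreover, if $\varphi_0$ is an irrational multiple of $2\pi$ and one of (a), (b), (c) holds for $\varphi_0$, then all of them hold with $\varphi_0$ replaced by any $\varphi\in\mathbb{R}$.
   Context: $U(N)$ is the group of unitary $N\times N$ complex matrices. For a compact connected subgroup $K\subset U(N)$ and $C,A\in\mathbb{C}^{N\times N}$, the relative $C$-numerical range is $W_K(C,A)=\{\mathrm{tr}(C^\dagger UAU^\dagger)\mid U\in K\}$, and the $K$-orbit of $A$ is $\mathcal{O}_K(A)=\{UAU^\dagger\mid U\in K\}$. *)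

theory Defs
  imports "HOL-Analysis.Analysis"
begin

text \<open>N x N complex matrices are modelled as complex^'n^'n, N = CARD('n).\<close>

definition cadj :: "complex^'n^'n \<Rightarrow> complex^'n^'n" where
  "cadj A = (\<chi> i j. cnj (A $ j $ i))"

definition unitary_group :: "(complex^'n^'n) set" where
  "unitary_group = {U. U ** cadj U = mat 1 \<and> cadj U ** U = mat 1}"

definition subgroup_of_U :: "(complex^'n^'n) set \<Rightarrow> bool" where
  "subgroup_of_U K \<longleftrightarrow> K \<subseteq> unitary_group \<and> mat 1 \<in> K \<and>
     (\<forall>U\<in>K. \<forall>V\<in>K. U ** V \<in> K) \<and> (\<forall>U\<in>K. cadj U \<in> K)"

definition cscale :: "complex \<Rightarrow> complex^'n^'n \<Rightarrow> complex^'n^'n" where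
  "cscale c A = (\<chi> i j. c * A $ i $ j)"

definition orbit_K :: "(complex^'n^'n) set \<Rightarrow> complex^'n^'n \<Rightarrow> (complex^'n^'n) set" where
  "orbit_K K A = {U ** A ** cadj U | U. U \<in> K}"

definition rel_num_range ::
  "(complex^'n^'n) set \<Rightarrow> complex^'n^'n \<Rightarrow> complex^'n^'n \<Rightarrow> complex set" where
  "rel_num_range K C A = {trace (cadj C ** (U ** A ** cadj U)) | U. U \<in> K}"

end

theory Submission
  imports Defs
begin


lemma cadj_mult: "cadj (A ** B) = cadj B ** cadj (A::complex^'n^'n)"
  by (simp add: cadj_def matrix_matrix_mult_def vec_eq_iff mult.commute)

lemma cadj_cadj: "cadj (cadj A) = A"
  by (simp add: cadj_def vec_eq_iff)

lemma cscale_conj: "cscale c (U ** A ** cadj U) = U ** cscale c A ** cadj (U::complex^'n^'n)"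
  by (simp add: cscale_def matrix_matrix_mult_def vec_eq_iff sum_distrib_left sum_distrib_right mult.assoc mult.left_commute)

lemma cscale_mult: "cscale c (cscale d A) = cscale (c*d) A"
  by (simp add: cscale_def vec_eq_iff mult.assoc)

lemma cscale_one: "cscale 1 A = A"
  by (simp add: cscale_def vec_eq_iff)

lemma trace_cscale: "trace (C ** cscale c B) = c * trace (C ** (B::complex^'n^'n))"
  by (simp add: cscale_def trace_def matrix_matrix_mult_def sum_distrib_left mult.left_commute)

lemma trace_eq: "trace (cadj A ** B) = (\<Sum>i\<in>UNIV. \<Sum>k\<in>UNIV. cnj (A$k$i) * (B::complex^'n^'n)$k$i)"
  by (simp add: trace_def matrix_matrix_mult_def cadj_def)

lemma trace_norm_conj:
  assumes "U \<in> unitary_group"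
  shows "trace (cadj (U ** A ** cadj U) ** (U ** A ** cadj U)) = trace (cadj A ** A)"
proof -
  have u: "cadj U ** U = mat 1" using assms by (simp add: unitary_group_def)
  have "cadj (U ** A ** cadj U) ** (U ** A ** cadj U) = U ** (cadj A ** A) ** cadj U"
    by (simp add: cadj_mult cadj_cadj matrix_mul_assoc)
       (metis matrix_mul_assoc matrix_mul_rid u)
  also have "trace \<dots> = trace ((cadj A ** A) ** (cadj U ** U))"
    by (metis matrix_mul_assoc trace_mul_sym)
  finally show ?thesis by (simp add: u)
qed


lemma cs_eq:
  fixes A B :: "complex^'n^'n"
  assumes c: "cmod c = 1" and n: "trace (cadj B ** B) = trace (cadj A ** A)"
    and t: "trace (cadj A ** B) = c * trace (cadj A ** A)"
  shows "B = cscale c A"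
proof -
  let ?a = "\<lambda>k i. A$k$i" and ?b = "\<lambda>k i. B$k$i"
  have cc: "cnj c * c = 1" using c by (metis complex_norm_square mult.commute of_real_1 power_one)
  define tA where "tA = trace (cadj A ** A)"
  have tAr: "cnj tA = tA" unfolding tA_def trace_eq by (simp add: mult.commute)
  have e: "(b - c*a) * cnj (b - c*a) = b * cnj b - cnj c * (cnj a * b) - c * cnj (cnj a * b) + (cnj c * c) * (a * cnj a)" for a b
    by (simp add: algebra_simps)
  have "(\<Sum>i\<in>UNIV. \<Sum>k\<in>UNIV. (?b k i - c * ?a k i) * cnj (?b k i - c * ?a k i))
     = trace (cadj B ** B) - cnj c * trace (cadj A ** B) - c * cnj (trace (cadj A ** B)) + trace (cadj A ** A)"
    unfolding e cc trace_eq
    by (simp add: sum.distrib sum_subtractf sum_distrib_left mult.commute)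
  also have "\<dots> = 0" using n t cc tAr unfolding tA_def[symmetric]
    by (simp add: algebra_simps)
  finally have z: "(\<Sum>i\<in>UNIV. \<Sum>k\<in>UNIV. complex_of_real ((cmod (?b k i - c * ?a k i))\<^sup>2)) = 0"
    by (simp only: complex_norm_square)
  hence "(\<Sum>i\<in>UNIV. \<Sum>k\<in>UNIV. (cmod (?b k i - c * ?a k i))\<^sup>2) = 0"
    by (metis (no_types, lifting) of_real_eq_0_iff of_real_sum sum.cong)
  hence "\<forall>i. (\<Sum>k\<in>UNIV. (cmod (?b k i - c * ?a k i))\<^sup>2) = 0"
    by (subst (asm) sum_nonneg_eq_0_iff) (auto intro: sum_nonneg)
  hence "\<forall>i k. (cmod (?b k i - c * ?a k i))\<^sup>2 = 0"
    by (subst (asm) sum_nonneg_eq_0_iff) auto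
  thus ?thesis by (simp add: cscale_def vec_eq_iff)
qed


lemma rnr_img: "rel_num_range K C A = (\<lambda>B. trace (cadj C ** B)) ` orbit_K K A"
  by (auto simp: rel_num_range_def orbit_K_def)

lemma orbit_mem: "U \<in> K \<Longrightarrow> U ** A ** cadj U \<in> orbit_K K A"
  by (auto simp: orbit_K_def)

lemma orbit_closed_step:
  assumes K: "subgroup_of_U K" and B: "B \<in> orbit_K K A" and U: "U \<in> K"
  shows "U ** B ** cadj U \<in> orbit_K K A"
proof -
  obtain V where V: "V \<in> K" "B = V ** A ** cadj V" using B by (auto simp: orbit_K_def)
  have "U ** B ** cadj U = (U ** V) ** A ** cadj (U ** V)"
    by (simp add: V cadj_mult matrix_mul_assoc)
  moreover have "U ** V \<in> K" using K U V by (simp add: subgroup_of_U_def)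
  ultimately show ?thesis by (simp add: orbit_mem)
qed

lemma orbit_inv:
  assumes K: "subgroup_of_U K" and c: "cscale c A \<in> orbit_K K A" and d: "cscale d A \<in> orbit_K K A"
    and cd: "c * d = 1"
  shows "cscale c ` orbit_K K A = orbit_K K A"
proof
  show "cscale c ` orbit_K K A \<subseteq> orbit_K K A"
    using orbit_closed_step[OF K c] by (auto simp: orbit_K_def cscale_conj)
  show "orbit_K K A \<subseteq> cscale c ` orbit_K K A"
  proof
    fix B assume "B \<in> orbit_K K A"
    then obtain U where U: "U \<in> K" "B = U ** A ** cadj U" by (auto simp: orbit_K_def)
    have "B = cscale c (U ** cscale d A ** cadj U)"
      by (simp add: U cscale_conj[symmetric] cscale_mult cd cscale_one)
    thus "B \<in> cscale c ` orbit_K K A" using orbit_closed_step[OF K d U(1)] by blast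
  qed
qed

lemma a_imp_b:
  assumes "cscale c ` orbit_K K A = orbit_K K A"
  shows "(\<lambda>z. c * z) ` rel_num_range K C A = rel_num_range K C A"
proof -
  have "(\<lambda>z. c * z) ` rel_num_range K C A = (\<lambda>B. trace (cadj C ** B)) ` (cscale c ` orbit_K K A)"
    unfolding rnr_img image_image trace_cscale ..
  thus ?thesis using assms by (simp add: rnr_img)
qed

lemma c_imp_a:
  assumes K: "subgroup_of_U K" and c: "cmod c = 1"
    and W: "(\<lambda>z. c * z) ` rel_num_range K A A = rel_num_range K A A"
  shows "cscale c ` orbit_K K A = orbit_K K A"
proof -
  have I: "mat 1 \<in> K" using K by (simp add: subgroup_of_U_def)
  have Ku: "U \<in> unitary_group" if "U \<in> K" for U using K that by (auto simp: subgroup_of_U_def)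
  define d where "d = cnj c"
  have cd: "c * d = 1" using c unfolding d_def by (metis complex_norm_square mult.commute of_real_1 power_one)
  have d: "cmod d = 1" using c by (simp add: d_def)
  have ci: "cadj (mat 1) = (mat 1 :: complex^'n^'n)" by (simp add: cadj_def mat_def vec_eq_iff)
  have Amem: "A \<in> orbit_K K A" using orbit_mem[OF I, of A] by (simp add: ci matrix_mul_lid matrix_mul_rid)
  have tr: "trace (cadj A ** A) \<in> rel_num_range K A A" using Amem by (auto simp: rnr_img)
  have gen: "cscale e A \<in> orbit_K K A" if e: "cmod e = 1" and m: "e * trace (cadj A ** A) \<in> rel_num_range K A A" for e
  proof -
    obtain U where U: "U \<in> K" "e * trace (cadj A ** A) = trace (cadj A ** (U ** A ** cadj U))"
      using m by (auto simp: rel_num_range_def)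
    have "U ** A ** cadj U = cscale e A"
      by (rule cs_eq[OF e trace_norm_conj[OF Ku[OF U(1)]] U(2)[symmetric]])
    thus ?thesis using orbit_mem[OF U(1)] by metis
  qed
  have 1: "c * trace (cadj A ** A) \<in> rel_num_range K A A" using tr W by blast
  have "trace (cadj A ** A) \<in> (\<lambda>z. c * z) ` rel_num_range K A A" using tr W by simp
  then obtain w where "w \<in> rel_num_range K A A" "trace (cadj A ** A) = c * w" by blast
  hence 2: "d * trace (cadj A ** A) \<in> rel_num_range K A A"
    by (metis cd mult.assoc mult.commute mult_1)
  show ?thesis by (rule orbit_inv[OF K gen[OF c 1] gen[OF d 2] cd])
qed


lemma orbit_img: "orbit_K K A = (\<lambda>U. U ** A ** cadj U) ` K"
  by (auto simp: orbit_K_def)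

lemma cont_conj: "continuous_on S (\<lambda>U::complex^'n^'n. U ** A ** cadj U)"
  unfolding matrix_matrix_mult_def cadj_def
  by (intro continuous_intros)

lemma closed_P:
  assumes "compact K"
  shows "closed {e. cscale e A \<in> orbit_K K A}"
proof -
  have "compact (orbit_K K A)" unfolding orbit_img
    by (rule compact_continuous_image[OF cont_conj assms])
  hence cl: "closed (orbit_K K A)" by (rule compact_imp_closed)
  have "continuous_on UNIV (\<lambda>e. cscale e A)" unfolding cscale_def
    by (intro continuous_intros)
  hence "continuous (at x) (\<lambda>e. cscale e A)" for x
    by (simp add: continuous_on_eq_continuous_at)
  from continuous_closed_vimage[OF cl this] show ?thesis by (simp add: vimage_def)
qed

lemma dense_rot:
  assumes K: "subgroup_of_U K" and cK: "compact K"
    and irr: "\<phi>0 / (2 * pi) \<notin> \<rat>"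
    and a: "cscale (exp (\<i> * of_real \<phi>0)) ` orbit_K K A = orbit_K K A"
  shows "cscale (exp (\<i> * of_real \<phi>)) A \<in> orbit_K K A"
proof -
  let ?P = "{e. cscale e A \<in> orbit_K K A}"
  let ?c = "exp (\<i> * of_real \<phi>0)"
  have I: "mat 1 \<in> K" using K by (simp add: subgroup_of_U_def)
  have ci: "cadj (mat 1) = (mat 1 :: complex^'n^'n)" by (simp add: cadj_def mat_def vec_eq_iff)
  have Amem: "A \<in> orbit_K K A" using orbit_mem[OF I, of A] by (simp add: ci matrix_mul_lid matrix_mul_rid)
  have pw: "?c ^ n \<in> ?P" for n
  proof (induction n)
    case 0 thus ?case using Amem by (simp add: cscale_one)
  next
    case (Suc n)
    hence "cscale ?c (cscale (?c ^ n) A) \<in> orbit_K K A" using a by blast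
    thus ?case by (simp add: cscale_mult)
  qed
  have "\<exists>y\<in>?P. dist y (exp (\<i> * of_real \<phi>)) < \<epsilon>" if e: "\<epsilon> > 0" for \<epsilon>
  proof -
    have "isCont (\<lambda>t::real. exp (\<i> * of_real t)) \<phi>" by (intro continuous_intros)
    then obtain \<delta> where \<delta>: "\<delta> > 0" "\<And>t. dist t \<phi> < \<delta> \<Longrightarrow> dist (exp (\<i> * of_real t)) (exp (\<i> * of_real \<phi>)) < \<epsilon>"
      using e unfolding continuous_at_eps_delta by metis
    have "\<delta> / (2*pi) > 0" using \<delta> by simp
    then obtain h k where k: "k > 0" "\<bar>of_int k * (\<phi>0 / (2 * pi)) - of_int h - \<phi> / (2*pi)\<bar> < \<delta> / (2*pi)"
      using sequence_of_fractional_parts_is_dense[OF irr] by metis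
    define t where "t = of_int k * \<phi>0 - 2 * pi * of_int h"
    have "\<bar>t - \<phi>\<bar> = 2*pi * \<bar>of_int k * (\<phi>0 / (2 * pi)) - of_int h - \<phi> / (2*pi)\<bar>"
    proof -
      have "t - \<phi> = 2*pi * (of_int k * (\<phi>0 / (2 * pi)) - of_int h - \<phi> / (2*pi))"
        unfolding t_def by (simp add: field_simps)
      thus ?thesis by (simp add: abs_mult)
    qed
    moreover have "2*pi * \<bar>of_int k * (\<phi>0 / (2 * pi)) - of_int h - \<phi> / (2*pi)\<bar> < 2*pi * (\<delta> / (2*pi))"
      by (rule mult_strict_left_mono[OF k(2)]) simp
    ultimately have "dist t \<phi> < \<delta>" by (simp add: dist_real_def)
    hence d: "dist (exp (\<i> * of_real t)) (exp (\<i> * of_real \<phi>)) < \<epsilon>" by (rule \<delta>(2))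
    have "exp (\<i> * of_real t) = exp (of_nat (nat k) * (\<i> * of_real \<phi>0)) * exp (- ((2 * of_int h * pi) * \<i>))"
      unfolding t_def using k(1) by (simp add: exp_add[symmetric] algebra_simps exp_diff)
    also have "\<dots> = ?c ^ nat k"
      using exp_integer_2pi[of "of_int h"] by (simp add: exp_of_nat_mult exp_minus)
    finally show ?thesis using d pw by metis
  qed
  hence "exp (\<i> * of_real \<phi>) \<in> ?P"
    using closed_approachable[OF closed_P[OF cK]] by blast
  thus ?thesis by simp
qed


lemma eqv:
  assumes K: "subgroup_of_U K"
  shows "((cscale (exp (\<i> * of_real \<phi>))) ` orbit_K K A = orbit_K K A
            \<longleftrightarrow> (\<forall>C. (\<lambda>z. exp (\<i> * of_real \<phi>) * z) ` rel_num_range K C A = rel_num_range K C A))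
       \<and> ((\<forall>C. (\<lambda>z. exp (\<i> * of_real \<phi>) * z) ` rel_num_range K C A = rel_num_range K C A)
            \<longleftrightarrow> (\<lambda>z. exp (\<i> * of_real \<phi>) * z) ` rel_num_range K A A = rel_num_range K A A)"
proof -
  have n: "cmod (exp (\<i> * of_real \<phi>)) = 1" by simp
  show ?thesis
  proof (intro conjI iffI allI)
    fix C assume "cscale (exp (\<i> * of_real \<phi>)) ` orbit_K K A = orbit_K K A"
    thus "(\<lambda>z. exp (\<i> * of_real \<phi>) * z) ` rel_num_range K C A = rel_num_range K C A" by (rule a_imp_b)
  next
    assume "\<forall>C. (\<lambda>z. exp (\<i> * of_real \<phi>) * z) ` rel_num_range K C A = rel_num_range K C A"
    hence "(\<lambda>z. exp (\<i> * of_real \<phi>) * z) ` rel_num_range K A A = rel_num_range K A A" by (rule spec)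
    thus "cscale (exp (\<i> * of_real \<phi>)) ` orbit_K K A = orbit_K K A" by (rule c_imp_a[OF K n])
  next
    assume "\<forall>C. (\<lambda>z. exp (\<i> * of_real \<phi>) * z) ` rel_num_range K C A = rel_num_range K C A"
    thus "(\<lambda>z. exp (\<i> * of_real \<phi>) * z) ` rel_num_range K A A = rel_num_range K A A" by (rule spec)
  next
    fix C assume "(\<lambda>z. exp (\<i> * of_real \<phi>) * z) ` rel_num_range K A A = rel_num_range K A A"
    hence "cscale (exp (\<i> * of_real \<phi>)) ` orbit_K K A = orbit_K K A" by (rule c_imp_a[OF K n])
    thus "(\<lambda>z. exp (\<i> * of_real \<phi>) * z) ` rel_num_range K C A = rel_num_range K C A" by (rule a_imp_b)
  qed
qed

lemma prop3a: "(P \<longleftrightarrow> Q) \<and> (Q \<longleftrightarrow> R) \<Longrightarrow> P \<or> Q \<or> R \<Longrightarrow> P" by blast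
lemma prop3b: "(P \<longleftrightarrow> Q) \<and> (Q \<longleftrightarrow> R) \<Longrightarrow> P \<Longrightarrow> Q" by blast
lemma prop3c: "(P \<longleftrightarrow> Q) \<and> (Q \<longleftrightarrow> R) \<Longrightarrow> P \<Longrightarrow> R" by blast

theorem proposition2p12:
  fixes K :: "(complex^'n^'n) set" and A :: "complex^'n^'n" and \<phi>0 :: real
  assumes "subgroup_of_U K" and "compact K" and "connected K"
  shows "((cscale (exp (\<i> * of_real \<phi>0))) ` orbit_K K A = orbit_K K A
            \<longleftrightarrow> (\<forall>C. (\<lambda>z. exp (\<i> * of_real \<phi>0) * z) ` rel_num_range K C A = rel_num_range K C A))
       \<and> ((\<forall>C. (\<lambda>z. exp (\<i> * of_real \<phi>0) * z) ` rel_num_range K C A = rel_num_range K C A)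
            \<longleftrightarrow> (\<lambda>z. exp (\<i> * of_real \<phi>0) * z) ` rel_num_range K A A = rel_num_range K A A)
       \<and> (\<phi>0 / (2 * pi) \<notin> \<rat> \<and>
          ((cscale (exp (\<i> * of_real \<phi>0))) ` orbit_K K A = orbit_K K A
           \<or> (\<forall>C. (\<lambda>z. exp (\<i> * of_real \<phi>0) * z) ` rel_num_range K C A = rel_num_range K C A)
           \<or> (\<lambda>z. exp (\<i> * of_real \<phi>0) * z) ` rel_num_range K A A = rel_num_range K A A)
          \<longrightarrow> (\<forall>\<phi>::real.
                (cscale (exp (\<i> * of_real \<phi>))) ` orbit_K K A = orbit_K K A
              \<and> (\<forall>C. (\<lambda>z. exp (\<i> * of_real \<phi>) * z) ` rel_num_range K C A = rel_num_range K C A)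
              \<and> (\<lambda>z. exp (\<i> * of_real \<phi>) * z) ` rel_num_range K A A = rel_num_range K A A))"
proof -
  note E = eqv[OF assms(1), of _ A]
  have M: "(cscale (exp (\<i> * of_real \<phi>))) ` orbit_K K A = orbit_K K A"
    if irr: "\<phi>0 / (2 * pi) \<notin> \<rat>" and a: "(cscale (exp (\<i> * of_real \<phi>0))) ` orbit_K K A = orbit_K K A"
    for \<phi>
  proof -
    have 1: "cscale (exp (\<i> * of_real \<phi>)) A \<in> orbit_K K A"
      by (rule dense_rot[OF assms(1,2) irr a])
    have 2: "cscale (exp (\<i> * of_real (-\<phi>))) A \<in> orbit_K K A"
      by (rule dense_rot[OF assms(1,2) irr a])
    have 3: "exp (\<i> * of_real \<phi>) * exp (\<i> * of_real (-\<phi>)) = 1"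
      by (simp add: exp_add[symmetric])
    show ?thesis by (rule orbit_inv[OF assms(1) 1 2 3])
  qed
  show ?thesis
  proof (intro conjI impI allI)
    show "(cscale (exp (\<i> * of_real \<phi>0)) ` orbit_K K A = orbit_K K A) =
    (\<forall>C. (\<lambda>z. exp (\<i> * of_real \<phi>0) * z) ` rel_num_range K C A = rel_num_range K C A)"
      using E[of \<phi>0] by (rule conjunct1)
    show "(\<forall>C. (\<lambda>z. exp (\<i> * of_real \<phi>0) * z) ` rel_num_range K C A = rel_num_range K C A) =
    ((\<lambda>z. exp (\<i> * of_real \<phi>0) * z) ` rel_num_range K A A = rel_num_range K A A)"
      using E[of \<phi>0] by (rule conjunct2)
    fix \<phi>
    assume h: "\<phi>0 / (2 * pi) \<notin> \<rat> \<and>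
          ((cscale (exp (\<i> * of_real \<phi>0))) ` orbit_K K A = orbit_K K A
           \<or> (\<forall>C. (\<lambda>z. exp (\<i> * of_real \<phi>0) * z) ` rel_num_range K C A = rel_num_range K C A)
           \<or> (\<lambda>z. exp (\<i> * of_real \<phi>0) * z) ` rel_num_range K A A = rel_num_range K A A)"
    have a0: "(cscale (exp (\<i> * of_real \<phi>0))) ` orbit_K K A = orbit_K K A"
      by (rule prop3a[OF E[of \<phi>0] conjunct2[OF h]])
    have a: "(cscale (exp (\<i> * of_real \<phi>))) ` orbit_K K A = orbit_K K A"
      using M[OF conjunct1[OF h] a0] .
    show "(cscale (exp (\<i> * of_real \<phi>))) ` orbit_K K A = orbit_K K A" by (rule a)
    show "(\<lambda>z. exp (\<i> * of_real \<phi>) * z) ` rel_num_range K C A = rel_num_range K C A" for C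
      by (rule spec[OF prop3b[OF E[of \<phi>] a]])
    show "(\<lambda>z. exp (\<i> * of_real \<phi>) * z) ` rel_num_range K A A = rel_num_range K A A"
      by (rule prop3c[OF E[of \<phi>] a])
  qed
qed

end
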